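(* For every integer $d\ge 1$ we have $\tau(d)<4(2d)^d$. In particular, $\tau(d)$ is finite for all $d$.
   Context: For an integer $d\ge1$, call $[-1,1]^d$ the box. A sequence $v_1,\dots,v_t$ ($t\ge 2$) of vectors in $[-1,1]^d$ is called minimal if (i) $v_1+\dots+v_t\in[-1,1]^d$, and (ii) for every index set $S\subset\{1,\dots,t\}$ with $2\le |S|<t$, the sum $\sum_{i\in S}v_i$ lies outside $[-1,1]^d$. Let $\tau(d)$ denote the largest $t$ for which a minimal sequence of length $t$ in $[-1,1]^d$ exists (note $\tau(d)\ge 2$, since condition (ii) is vacuous for $t=2$). Equivalently, $\tau(d)$ is the smallest integer such that whenever $v_1,\dots,v_t\in[-1,1]^d$, $t\ge2$, have sum in $[-1,1]^d$, there is $S\subseteq\{1,\dots,t\}$ with $2\le|S|\le\tau(d)$ and $\sum_{i\in S}v_i\in[-1,1]^d$. *)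

theory Defs
  imports Complex_Main
begin

text \<open>Vectors in R^d are represented as functions nat => real; only coordinates i < d matter.
  A sequence v_1,...,v_t is represented as v :: nat => (nat => real) indexed by 0..<t.\<close>

definition in_box :: "nat \<Rightarrow> (nat \<Rightarrow> real) \<Rightarrow> bool" where
  "in_box d x \<longleftrightarrow> (\<forall>i<d. \<bar>x i\<bar> \<le> 1)"

definition minimal_seq :: "nat \<Rightarrow> nat \<Rightarrow> (nat \<Rightarrow> nat \<Rightarrow> real) \<Rightarrow> bool" where
  "minimal_seq d t v \<longleftrightarrow>
     2 \<le> t \<and>
     (\<forall>j<t. in_box d (v j)) \<and>
     in_box d (\<lambda>i. \<Sum>j<t. v j i) \<and>
     (\<forall>S. S \<subseteq> {..<t} \<and> 2 \<le> card S \<and> card S < t \<longrightarrow>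
        \<not> in_box d (\<lambda>i. \<Sum>j\<in>S. v j i))"

definition tau :: "nat \<Rightarrow> nat" where
  "tau d = Max {t. \<exists>v. minimal_seq d t v}"

end

theory Submission
  imports Defs "HOL-Library.FuncSet"
begin


lemma lin_dep:
  fixes x :: "nat \<Rightarrow> nat \<Rightarrow> real"
  assumes "finite F" "n < card F"
  shows "\<exists>\<alpha>. (\<exists>i\<in>F. \<alpha> i \<noteq> 0) \<and> (\<forall>c<n. (\<Sum>i\<in>F. \<alpha> i * x i c) = 0)"
  using assms
proof (induction n arbitrary: F x)
  case 0
  then have "F \<noteq> {}" by auto
  then show ?case by (rule_tac x="\<lambda>_. 1" in exI) auto
next
  case (Suc n)
  show ?case
  proof (cases "\<forall>i\<in>F. x i n = 0")
    case True
    from Suc.IH[of F x] Suc.prems obtain \<alpha> where a: "\<exists>i\<in>F. \<alpha> i \<noteq> 0"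
      "\<forall>c<n. (\<Sum>i\<in>F. \<alpha> i * x i c) = 0" by auto
    have "\<forall>c<Suc n. (\<Sum>i\<in>F. \<alpha> i * x i c) = 0"
      using a True by (auto simp: less_Suc_eq)
    then show ?thesis using a by blast
  next
    case False
    then obtain p where p: "p \<in> F" "x p n \<noteq> 0" by auto
    define F' where "F' = F - {p}"
    define y where "y = (\<lambda>i c. x i c - (x i n / x p n) * x p c)"
    have fF': "finite F'" using Suc.prems F'_def by auto
    have cF': "n < card F'" using Suc.prems p F'_def by auto
    from Suc.IH[OF fF' cF', of y] obtain \<beta> where b: "\<exists>i\<in>F'. \<beta> i \<noteq> 0"
      "\<forall>c<n. (\<Sum>i\<in>F'. \<beta> i * y i c) = 0" by auto
    define \<alpha> where "\<alpha> = (\<lambda>i. if i = p then - (\<Sum>j\<in>F'. \<beta> j * x j n) / x p n else \<beta> i)"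
    have key: "(\<Sum>i\<in>F. \<alpha> i * x i c) = (\<Sum>i\<in>F'. \<beta> i * y i c)" for c
    proof -
      have "(\<Sum>i\<in>F. \<alpha> i * x i c) = \<alpha> p * x p c + (\<Sum>i\<in>F'. \<alpha> i * x i c)"
        using p Suc.prems(1) F'_def by (simp add: sum.remove)
      also have "(\<Sum>i\<in>F'. \<alpha> i * x i c) = (\<Sum>i\<in>F'. \<beta> i * x i c)"
        by (rule sum.cong) (auto simp: \<alpha>_def F'_def)
      also have "(\<Sum>i\<in>F'. \<beta> i * y i c) = (\<Sum>i\<in>F'. \<beta> i * x i c) - (\<Sum>i\<in>F'. \<beta> i * x i n) / x p n * x p c"
        by (simp add: y_def algebra_simps sum_subtractf sum_distrib_left sum_distrib_right sum_divide_distrib)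
      ultimately show ?thesis by (simp add: \<alpha>_def)
    qed
    have yn: "(\<Sum>i\<in>F'. \<beta> i * y i n) = 0" using p by (simp add: y_def)
    have "\<forall>c<Suc n. (\<Sum>i\<in>F. \<alpha> i * x i c) = 0"
      using key b(2) yn by (auto simp: less_Suc_eq)
    moreover have "\<exists>i\<in>F. \<alpha> i \<noteq> 0" using b(1) by (auto simp: \<alpha>_def F'_def)
    ultimately show ?thesis by blast
  qed
qed



lemma reduce:
  fixes w :: "nat \<Rightarrow> nat \<Rightarrow> real" and lam :: "nat \<Rightarrow> real"
  assumes "finite A" "\<forall>i\<in>A. 0 \<le> lam i \<and> lam i \<le> 1"
    "(\<Sum>i\<in>A. lam i) = m" "\<forall>c<d. (\<Sum>i\<in>A. lam i * w i c) = 0"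
    "m \<le> real (card A) - real d - 1"
  shows "\<exists>l. (\<forall>i\<in>A. 0 \<le> l i \<and> l i \<le> 1) \<and> (\<Sum>i\<in>A. l i) = m \<and>
     (\<forall>c<d. (\<Sum>i\<in>A. l i * w i c) = 0) \<and> (\<exists>a\<in>A. l a = 0)"
  using assms(2-4)
proof (induction "card {i\<in>A. 0 < lam i \<and> lam i < 1}" arbitrary: lam rule: less_induct)
  case less
  define F where "F = {i\<in>A. 0 < lam i \<and> lam i < 1}"
  have fF: "finite F" "F \<subseteq> A" using assms(1) F_def by auto
  show ?case
  proof (cases "\<exists>a\<in>A. lam a = 0")
    case True
    then show ?thesis using less.prems by blast
  next
    case nz: False
    have one: "\<forall>i\<in>A-F. lam i = 1" using nz less.prems(1) F_def by force
    show ?thesis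
    proof (cases "card F \<le> d + 1")
      case True
      have "(\<Sum>i\<in>A. lam i) = (\<Sum>i\<in>A-F. lam i) + (\<Sum>i\<in>F. lam i)"
        using fF assms(1) by (metis sum.subset_diff)
      also have "(\<Sum>i\<in>A-F. lam i) = real (card A - card F)"
        using one fF assms(1) by (simp add: card_Diff_subset)
      finally have eq: "(\<Sum>i\<in>A. lam i) = real (card A - card F) + (\<Sum>i\<in>F. lam i)" .
      have cle: "card F \<le> card A" using fF assms(1) card_mono by auto
      show ?thesis
      proof (cases "F = {}")
        case True
        then show ?thesis using eq less.prems(2) assms(5) by simp
      next
        case False
        have "(\<Sum>i\<in>F. lam i) > 0" using False fF by (intro sum_pos) (auto simp: F_def)
        then show ?thesis using eq less.prems(2) assms(5) True cle by (simp add: of_nat_diff)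
      qed
    next
      case False
      define x where "x = (\<lambda>i c. if c < d then w i c else (1::real))"
      have "d + 1 < card F" using False by simp
      from lin_dep[OF fF(1) this, of x] obtain \<alpha> where
        al: "\<exists>i\<in>F. \<alpha> i \<noteq> 0" "\<forall>c<d+1. (\<Sum>i\<in>F. \<alpha> i * x i c) = 0" by auto
      define \<beta> where "\<beta> = (\<lambda>i. if i \<in> F then \<alpha> i else 0)"
      have sb: "(\<Sum>i\<in>A. \<beta> i * g i) = (\<Sum>i\<in>F. \<alpha> i * g i)" for g
      proof -
        have "(\<Sum>i\<in>A. \<beta> i * g i) = (\<Sum>i\<in>F. \<beta> i * g i)"
          using fF assms(1) by (intro sum.mono_neutral_right) (auto simp: \<beta>_def)
        then show ?thesis by (simp add: \<beta>_def)
      qed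
      have b1: "(\<Sum>i\<in>A. \<beta> i) = 0" using sb[of "\<lambda>_. 1"] al(2)[rule_format, of d] by (simp add: x_def)
      have b2: "\<forall>c<d. (\<Sum>i\<in>A. \<beta> i * w i c) = 0"
      proof (intro allI impI)
        fix c assume "c < d"
        then show "(\<Sum>i\<in>A. \<beta> i * w i c) = 0" using sb al(2)[rule_format, of c] by (simp add: x_def)
      qed
      define G where "G = {i\<in>F. \<beta> i \<noteq> 0}"
      define r where "r = (\<lambda>i. if \<beta> i > 0 then (1 - lam i) / \<beta> i else lam i / (- \<beta> i))"
      have fG: "finite G" "G \<noteq> {}" using fF al(1) by (auto simp: G_def \<beta>_def)
      define \<epsilon> where "\<epsilon> = Min (r ` G)"
      have "\<epsilon> \<in> r ` G" unfolding \<epsilon>_def using fG by (intro Min_in) auto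
      then obtain i0 where i0: "i0 \<in> G" "r i0 = \<epsilon>" by auto
      have rle: "\<epsilon> \<le> r i" if "i \<in> G" for i using fG that \<epsilon>_def by auto
      have rpos: "r i > 0" if "i \<in> G" for i using that by (auto simp: r_def G_def F_def divide_pos_neg)
      define l where "l = (\<lambda>i. lam i + \<epsilon> * \<beta> i)"
      have lrange: "0 \<le> l i \<and> l i \<le> 1" if "i \<in> A" for i
      proof (cases "i \<in> G")
        case True
        have e: "0 < \<epsilon>" "\<epsilon> \<le> r i" using rpos[OF i0(1)] i0 rle[OF True] by auto
        show ?thesis
        proof (cases "\<beta> i > 0")
          case True
          have "\<epsilon> * \<beta> i \<le> 1 - lam i" using e True by (simp add: r_def pos_le_divide_eq)
          then show ?thesis using True e less.prems(1) that by (simp add: l_def)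
        next
          case False
          then have bn: "\<beta> i < 0" using \<open>i\<in>G\<close> by (auto simp: G_def)
          have "\<epsilon> \<le> lam i / (- \<beta> i)" using e bn by (simp add: r_def)
          then have "\<epsilon> * (- \<beta> i) \<le> lam i" using bn pos_le_divide_eq[of "- \<beta> i"] by simp
          moreover have "\<epsilon> * \<beta> i < 0" using bn e by (simp add: mult_pos_neg)
          ultimately show ?thesis using less.prems(1) that by (auto simp: l_def)          
        qed
      next
        case False
        then have "\<beta> i = 0" by (auto simp: G_def \<beta>_def)
        then show ?thesis using less.prems(1) that by (simp add: l_def)
      qed
      have i0e: "l i0 = 0 \<or> l i0 = 1"
      proof (cases "\<beta> i0 > 0")
        case True
        then have "\<epsilon> = (1 - lam i0) / \<beta> i0" using i0 by (simp add: r_def)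
        then have "\<epsilon> * \<beta> i0 = 1 - lam i0" using True by simp
        then show ?thesis by (simp add: l_def)
      next
        case False
        then have "\<beta> i0 < 0" using i0 by (auto simp: G_def)
        moreover have "\<epsilon> = lam i0 / (- \<beta> i0)" using i0 False by (simp add: r_def)
        ultimately have "\<epsilon> * \<beta> i0 = - lam i0" by simp
        then show ?thesis by (simp add: l_def)
      qed
      have sub: "{i\<in>A. 0 < l i \<and> l i < 1} \<subseteq> F - {i0}"
      proof
        fix i assume i: "i \<in> {i\<in>A. 0 < l i \<and> l i < 1}"
        have "i \<noteq> i0" using i i0e by auto
        moreover have "i \<in> F"
        proof (rule ccontr)
          assume "i \<notin> F"
          then have "l i = lam i" "lam i = 1" using one i by (auto simp: l_def \<beta>_def)
          then show False using i by simp
        qed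
        ultimately show "i \<in> F - {i0}" by simp
      qed
      have "card {i\<in>A. 0 < l i \<and> l i < 1} \<le> card (F - {i0})"
        using sub fF by (intro card_mono) auto
      also have "\<dots> < card F" using i0 fF by (intro card_Diff1_less) (auto simp: G_def)
      finally have lt: "card {i\<in>A. 0 < l i \<and> l i < 1} < card {i\<in>A. 0 < lam i \<and> lam i < 1}"
        by (simp add: F_def)
      have s1: "(\<Sum>i\<in>A. l i) = m" using b1 less.prems(2)
        by (simp add: l_def sum.distrib sum_distrib_left[symmetric])
      have s2: "\<forall>c<d. (\<Sum>i\<in>A. l i * w i c) = 0"
      proof (intro allI impI)
        fix c assume "c < d"
        have "(\<Sum>i\<in>A. l i * w i c) = (\<Sum>i\<in>A. lam i * w i c) + \<epsilon> * (\<Sum>i\<in>A. \<beta> i * w i c)"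
          by (simp add: l_def algebra_simps sum.distrib sum_distrib_left)
        then show "(\<Sum>i\<in>A. l i * w i c) = 0" using b2 less.prems(3) \<open>c<d\<close> by simp
      qed
      show ?thesis using less.hyps[OF lt] lrange s1 s2 by blast
    qed
  qed
qed



lemma sum_box_bound:
  fixes w :: "nat \<Rightarrow> nat \<Rightarrow> real"
  assumes "finite B" "\<forall>i\<in>B. \<bar>w i c\<bar> \<le> 1"
  shows "\<bar>\<Sum>i\<in>B. w i c\<bar> \<le> real (card B)"
proof -
  have "\<bar>\<Sum>i\<in>B. w i c\<bar> \<le> (\<Sum>i\<in>B. \<bar>w i c\<bar>)" by (rule sum_abs)
  also have "\<dots> \<le> (\<Sum>i\<in>B. 1)" using assms by (intro sum_mono) auto
  finally show ?thesis by simp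
qed

lemma full_bound:
  fixes w :: "nat \<Rightarrow> nat \<Rightarrow> real"
  assumes "finite A" "\<forall>i\<in>A. \<bar>w i c\<bar> \<le> 1" "\<forall>i\<in>A. 0 \<le> lam i \<and> lam i \<le> 1"
    "(\<Sum>i\<in>A. lam i) = real (card A) - real d" "(\<Sum>i\<in>A. lam i * w i c) = 0"
  shows "\<bar>\<Sum>i\<in>A. w i c\<bar> \<le> real d"
proof -
  have "(\<Sum>i\<in>A. w i c) = (\<Sum>i\<in>A. (1 - lam i) * w i c)"
    using assms(5) by (simp add: algebra_simps sum_subtractf)
  then have "\<bar>\<Sum>i\<in>A. w i c\<bar> \<le> (\<Sum>i\<in>A. \<bar>(1 - lam i) * w i c\<bar>)"
    by (simp add: sum_abs)
  also have "\<dots> \<le> (\<Sum>i\<in>A. (1 - lam i))"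
  proof (intro sum_mono)
    fix i assume "i \<in> A"
    then have "0 \<le> 1 - lam i" "\<bar>w i c\<bar> \<le> 1" using assms by auto
    then show "\<bar>(1 - lam i) * w i c\<bar> \<le> 1 - lam i"
      by (simp add: abs_mult mult_left_le)
  qed
  also have "\<dots> = real d" using assms(4) by (simp add: sum_subtractf)
  finally show ?thesis .
qed

lemma steinitz:
  fixes w :: "nat \<Rightarrow> nat \<Rightarrow> real"
  assumes "finite A" "card A = k" "\<forall>i\<in>A. \<forall>c<d. \<bar>w i c\<bar> \<le> 1"
    "\<forall>i\<in>A. 0 \<le> lam i \<and> lam i \<le> 1" "(\<Sum>i\<in>A. lam i) = real k - real d"
    "\<forall>c<d. (\<Sum>i\<in>A. lam i * w i c) = 0" "d \<le> k"
  shows "\<exists>xs. distinct xs \<and> set xs = A \<and>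
     (\<forall>j\<le>k. \<forall>c<d. \<bar>\<Sum>i\<in>set (take j xs). w i c\<bar> \<le> real d)"
  using assms
proof (induction k arbitrary: A lam)
  case 0
  then show ?case by (rule_tac x="[]" in exI) auto
next
  case (Suc k)
  show ?case
  proof (cases "d = Suc k")
    case True
    obtain xs where xs: "distinct xs" "set xs = A" using finite_distinct_list[OF Suc.prems(1)] by auto
    have "\<bar>\<Sum>i\<in>set (take j xs). w i c\<bar> \<le> real d" if "c < d" for j c
    proof -
      have "set (take j xs) \<subseteq> A" using xs by (meson set_take_subset)
      then have "\<bar>\<Sum>i\<in>set (take j xs). w i c\<bar> \<le> real (card (set (take j xs)))"
        using Suc.prems(3) that by (intro sum_box_bound) auto
      also have "card (set (take j xs)) \<le> card A" using \<open>set (take j xs) \<subseteq> A\<close> Suc.prems(1)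
        by (rule card_mono[rotated])
      finally show ?thesis using True Suc.prems(2) by simp
    qed
    then show ?thesis using xs by blast
  next
    case False
    then have dk: "d \<le> k" using Suc.prems(7) by simp
    define q where "q = (real k - real d) / (real (Suc k) - real d)"
    have q: "0 \<le> q" "q \<le> 1" using dk by (auto simp: q_def)
    define mu where "mu = (\<lambda>i. q * lam i)"
    have m1: "\<forall>i\<in>A. 0 \<le> mu i \<and> mu i \<le> 1" using q Suc.prems(4)
      by (auto simp: mu_def mult_le_one)
    have m2: "(\<Sum>i\<in>A. mu i) = real k - real d"
    proof -
      have "(\<Sum>i\<in>A. mu i) = q * (real (Suc k) - real d)"
        using Suc.prems(5) by (simp add: mu_def sum_distrib_left[symmetric])
      also have "\<dots> = real k - real d" using dk by (simp add: q_def)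
      finally show ?thesis .
    qed
    have m3: "\<forall>c<d. (\<Sum>i\<in>A. mu i * w i c) = 0"
      using Suc.prems(6) by (simp add: mu_def sum_distrib_left[symmetric] mult.assoc)
    have m4: "real k - real d \<le> real (card A) - real d - 1" using Suc.prems(2) by simp
    obtain l a where l: "\<forall>i\<in>A. 0 \<le> l i \<and> l i \<le> 1" "(\<Sum>i\<in>A. l i) = real k - real d"
      "\<forall>c<d. (\<Sum>i\<in>A. l i * w i c) = 0" "a \<in> A" "l a = 0"
      using reduce[OF Suc.prems(1) m1 m2 m3 m4] by blast
    define A' where "A' = A - {a}"
    have A': "finite A'" "card A' = k" using Suc.prems(1,2) l(4) by (auto simp: A'_def)
    have l2: "(\<Sum>i\<in>A'. l i) = real k - real d"
      using l(2,4,5) Suc.prems(1) by (simp add: A'_def sum.remove)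
    have l3: "\<forall>c<d. (\<Sum>i\<in>A'. l i * w i c) = 0"
      using l(3,4,5) Suc.prems(1) by (simp add: A'_def sum.remove)
    obtain xs where xs: "distinct xs" "set xs = A'"
      "\<forall>j\<le>k. \<forall>c<d. \<bar>\<Sum>i\<in>set (take j xs). w i c\<bar> \<le> real d"
      using Suc.IH[OF A' _ _ l2 l3 dk] Suc.prems(3) l(1) by (auto simp: A'_def)
    have len: "length xs = k" using xs A' distinct_card by fastforce
    have "\<forall>j\<le>Suc k. \<forall>c<d. \<bar>\<Sum>i\<in>set (take j (xs @ [a])). w i c\<bar> \<le> real d"
    proof (intro allI impI)
      fix j c assume j: "j \<le> Suc k" and c: "c < d"
      show "\<bar>\<Sum>i\<in>set (take j (xs @ [a])). w i c\<bar> \<le> real d"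
      proof (cases "j \<le> k")
        case True
        then show ?thesis using xs(3) len c by simp
      next
        case False
        then have "j = Suc k" using j by simp
        then have "set (take j (xs @ [a])) = A" using len xs l(4) by (auto simp: A'_def)
        then show ?thesis using full_bound[of A w c lam d] Suc.prems c by simp
      qed
    qed
    moreover have "distinct (xs @ [a])" "set (xs @ [a]) = A" using xs l(4) by (auto simp: A'_def)
    ultimately show ?thesis by blast
  qed
qed



lemma cell_bounds:
  fixes x :: real and d :: nat
  assumes "\<bar>x\<bar> \<le> real d" "1 \<le> d"
  shows "of_int (min \<lfloor>x\<rfloor> (int d - 1)) \<le> x" "x \<le> of_int (min \<lfloor>x\<rfloor> (int d - 1)) + 1"
    "min \<lfloor>x\<rfloor> (int d - 1) \<in> {- int d..<int d}"
proof -
  show "of_int (min \<lfloor>x\<rfloor> (int d - 1)) \<le> x"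
    by (metis min.cobounded1 floor_le_iff order_refl order_trans of_int_floor_le of_int_le_iff)
  show "x \<le> of_int (min \<lfloor>x\<rfloor> (int d - 1)) + 1"
  proof (cases "\<lfloor>x\<rfloor> \<le> int d - 1")
    case True then show ?thesis by (simp add: min_def)
  next
    case False
    then show ?thesis using assms by (simp add: min_def)
  qed
  have "- int d \<le> \<lfloor>x\<rfloor>" using assms by (simp add: le_floor_iff)
  then show "min \<lfloor>x\<rfloor> (int d - 1) \<in> {- int d..<int d}" using assms by auto
qed

lemma three_pick:
  fixes X :: "nat set"
  assumes "finite X" "3 \<le> card X" "X \<subseteq> {..<n}" "4 \<le> n"
  shows "\<exists>i\<in>X. \<exists>j\<in>X. i < j \<and> 2 \<le> j - i \<and> j - i \<le> n - 2"
proof -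
  have ne: "X \<noteq> {}" using assms by auto
  define a where "a = Min X"
  define c where "c = Max X"
  have ac: "a \<in> X" "c \<in> X" using ne assms(1) by (auto simp: a_def c_def)
  have "card (X - {a, c}) \<ge> card X - 2"
  proof -
    have "card X - card {a,c} \<le> card (X - {a,c})" by (rule diff_card_le_card_Diff) auto
    moreover have "card {a,c} \<le> 2" by (simp add: card_insert_le_m1)
    ultimately show ?thesis by linarith
  qed
  then have "card (X - {a, c}) \<noteq> 0" using assms(2) by linarith
  then have "X - {a, c} \<noteq> {}" by (metis card.empty)
  then obtain b where b: "b \<in> X" "b \<noteq> a" "b \<noteq> c" by auto
  have "a \<le> b" "b \<le> c" using b assms(1) by (auto simp: a_def c_def)
  then have abc: "a < b" "b < c" using b by auto
  have "c < n" using ac assms(3) by auto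
  show ?thesis
  proof (cases "2 \<le> b - a")
    case True then show ?thesis using ac b abc \<open>c<n\<close> by (rule_tac x=a in bexI, rule_tac x=b in bexI) auto
  next
    case F1: False
    show ?thesis
    proof (cases "2 \<le> c - b")
      case True then show ?thesis using ac b abc \<open>c<n\<close> by (rule_tac x=b in bexI, rule_tac x=c in bexI) auto
    next
      case False then show ?thesis using F1 ac b abc \<open>c<n\<close> assms(4)
        by (rule_tac x=a in bexI, rule_tac x=c in bexI) auto
    qed
  qed
qed

lemma pigeon3:
  fixes f :: "nat \<Rightarrow> 'b"
  assumes "finite D" "f ` D \<subseteq> P" "finite P" "2 * card P < card D"
  shows "\<exists>y. 3 \<le> card {x\<in>D. f x = y}"
proof (rule ccontr)
  assume H: "\<not> (\<exists>y. 3 \<le> card {x\<in>D. f x = y})"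
  have le: "card {x\<in>D. f x = y} \<le> 2" for y
  proof -
    have "\<not> 3 \<le> card {x\<in>D. f x = y}" using H by auto
    then show ?thesis by linarith
  qed
  have "D = (\<Union>y\<in>f ` D. {x\<in>D. f x = y})" by auto
  then have "card D \<le> (\<Sum>y\<in>f ` D. card {x\<in>D. f x = y})"
    by (metis card_UN_le assms(1) finite_imageI)
  also have "\<dots> \<le> (\<Sum>y\<in>f ` D. 2)" using le by (intro sum_mono) auto
  also have "\<dots> = 2 * card (f ` D)" by simp
  also have "\<dots> \<le> 2 * card P" using assms by (simp add: card_mono)
  finally show False using assms(4) by simp
qed



lemma main_bound:
  assumes mv: "minimal_seq d t v" and d1: "1 \<le> d"
  shows "t + 1 \<le> 2 * (2 * d) ^ d"
proof (rule ccontr)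
  assume H: "\<not> t + 1 \<le> 2 * (2 * d) ^ d"
  have "2 * d \<le> (2 * d) ^ d" using d1 power_increasing[of 1 d "2*d"] by simp
  then have t4: "4 \<le> t" using H d1 by linarith
  define n where "n = Suc t"
  define s where "s = (\<lambda>c. \<Sum>j<t. v j c)"
  define w where "w = (\<lambda>j. if j < t then v j else (\<lambda>c. - s c))"
  have m: "2 \<le> t" "\<forall>j<t. in_box d (v j)" "in_box d s"
     "\<And>S. S \<subseteq> {..<t} \<Longrightarrow> 2 \<le> card S \<Longrightarrow> card S < t \<Longrightarrow> \<not> in_box d (\<lambda>i. \<Sum>j\<in>S. v j i)"
    using mv unfolding minimal_seq_def s_def by auto
  have wb: "\<forall>i\<in>{..<n}. \<forall>c<d. \<bar>w i c\<bar> \<le> 1"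
    using m(2,3) by (auto simp: w_def in_box_def n_def)
  have w0: "(\<Sum>i\<in>{..<n}. w i c) = 0" for c
  proof -
    have "(\<Sum>i\<in>{..<n}. w i c) = (\<Sum>i<t. w i c) + w t c" by (simp add: n_def)
    also have "(\<Sum>i<t. w i c) = s c" unfolding s_def by (rule sum.cong) (auto simp: w_def)
    finally show ?thesis by (simp add: w_def)
  qed
  obtain xs where xs: "distinct xs" "set xs = {..<n}"
    "\<forall>j\<le>n. \<forall>c<d. \<bar>\<Sum>i\<in>set (take j xs). w i c\<bar> \<le> real d"
  proof (cases "d \<le> n")
    case True
    define lam where "lam = (\<lambda>i::nat. (real n - real d) / real n)"
    have "n > 0" by (simp add: n_def)
    have l1: "\<forall>i\<in>{..<n}. 0 \<le> lam i \<and> lam i \<le> 1" using True \<open>n>0\<close> by (auto simp: lam_def)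
    have l2: "(\<Sum>i\<in>{..<n}. lam i) = real n - real d" using \<open>n>0\<close> by (simp add: lam_def)
    have l3: "\<forall>c<d. (\<Sum>i\<in>{..<n}. lam i * w i c) = 0"
    proof (intro allI impI)
      fix c
      have "(\<Sum>i\<in>{..<n}. lam i * w i c) = ((real n - real d) / real n) * (\<Sum>i\<in>{..<n}. w i c)"
        unfolding lam_def by (rule sum_distrib_left[symmetric])
      then show "(\<Sum>i\<in>{..<n}. lam i * w i c) = 0" using w0 by simp
    qed
    from steinitz[OF _ _ wb l1 l2 l3 True] show ?thesis using that by auto
  next
    case False
    have "\<forall>j\<le>n. \<forall>c<d. \<bar>\<Sum>i\<in>set (take j [0..<n]). w i c\<bar> \<le> real d"
    proof (intro allI impI)
      fix j c assume "j \<le> n" "c < d"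
      have "set (take j [0..<n]) \<subseteq> {..<n}" by (auto dest: in_set_takeD)
      then have "\<bar>\<Sum>i\<in>set (take j [0..<n]). w i c\<bar> \<le> real (card (set (take j [0..<n])))"
        using wb \<open>c<d\<close> by (intro sum_box_bound) auto
      also have "card (set (take j [0..<n])) \<le> n"
        using \<open>set (take j [0..<n]) \<subseteq> {..<n}\<close> by (metis card_lessThan card_mono finite_lessThan)
      finally show "\<bar>\<Sum>i\<in>set (take j [0..<n]). w i c\<bar> \<le> real d" using False by simp
    qed
    moreover have "distinct [0..<n]" "set [0..<n] = {..<n}" by auto
    ultimately show ?thesis using that[of "[0..<n]"] by blast
  qed
  have lenxs: "length xs = n" using xs(1,2) distinct_card by fastforce
  define Q where "Q = (\<lambda>j c. \<Sum>i\<in>set (take j xs). w i c)"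
  define cell where "cell = (\<lambda>j. \<lambda>c\<in>{..<d}. min \<lfloor>Q j c\<rfloor> (int d - 1))"
  define P where "P = PiE {..<d} (\<lambda>_. {- int d..<int d})"
  have cellP: "cell ` {..<n} \<subseteq> P"
  proof
    fix y assume "y \<in> cell ` {..<n}"
    then obtain j where j: "j < n" "y = cell j" by auto
    have "\<forall>c<d. \<bar>Q j c\<bar> \<le> real d" using xs(3) j by (simp add: Q_def)
    then show "y \<in> P" using j cell_bounds(3)[OF _ d1] by (auto simp: P_def cell_def)
  qed
  have "nat (2 * int d) = 2 * d" by simp
  then have cardP: "card P = (2 * d) ^ d" by (simp add: P_def card_PiE power_mult_distrib)
  have "2 * card P < card {..<n}" using H by (simp add: cardP n_def)
  have "finite P" by (simp add: P_def finite_PiE)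
  from pigeon3[OF _ cellP this] \<open>2 * card P < card {..<n}\<close> obtain y where y: "3 \<le> card {x\<in>{..<n}. cell x = y}"
    by blast
  have "\<exists>i\<in>{x\<in>{..<n}. cell x = y}. \<exists>j\<in>{x\<in>{..<n}. cell x = y}. i < j \<and> 2 \<le> j - i \<and> j - i \<le> n - 2"
    by (rule three_pick[OF _ y]) (use t4 in \<open>auto simp: n_def\<close>)
  then obtain i j where ij:
    "i < n" "j < n" "cell i = y" "cell j = y" "i < j" "2 \<le> j - i" "j - i \<le> n - 2"
    by blast
  have close: "\<bar>Q j c - Q i c\<bar> \<le> 1" if "c < d" for c
  proof -
    have "min \<lfloor>Q i c\<rfloor> (int d - 1) = min \<lfloor>Q j c\<rfloor> (int d - 1)"
    proof -
      have "cell i c = cell j c" using ij(3,4) by simp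
      then show ?thesis using that by (simp add: cell_def)
    qed
    moreover have "\<bar>Q i c\<bar> \<le> real d" "\<bar>Q j c\<bar> \<le> real d" using xs(3) ij that by (auto simp: Q_def)
    ultimately show ?thesis using cell_bounds(1,2)[OF _ d1, of "Q i c"] cell_bounds(1,2)[OF _ d1, of "Q j c"]
      by linarith
  qed
  define Ti where "Ti = set (take i xs)"
  define Tj where "Tj = set (take j xs)"
  have sub: "Ti \<subseteq> Tj" using ij by (simp add: Ti_def Tj_def set_take_subset_set_take)
  have cTi: "card Ti = i" using ij lenxs xs(1) by (simp add: Ti_def distinct_card)
  have cTj: "card Tj = j" using ij lenxs xs(1) by (simp add: Tj_def distinct_card)
  define B where "B = Tj - Ti"
  have cB: "card B = j - i" using sub cTi cTj by (simp add: B_def card_Diff_subset Ti_def)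
  have Bsub: "B \<subseteq> {..<n}" using xs(2) by (auto simp: B_def Tj_def dest: in_set_takeD)
  have QB: "Q j c - Q i c = (\<Sum>k\<in>B. w k c)" for c
    using sub by (simp add: Q_def B_def Ti_def Tj_def sum_diff)
  show False
  proof (cases "t \<in> B")
    case False
    then have Bt: "B \<subseteq> {..<t}" using Bsub by (auto simp: n_def less_Suc_eq)
    have "in_box d (\<lambda>c. \<Sum>k\<in>B. v k c)"
      unfolding in_box_def
    proof (intro allI impI)
      fix c assume "c < d"
      have "(\<Sum>k\<in>B. v k c) = (\<Sum>k\<in>B. w k c)" using Bt by (intro sum.cong) (auto simp: w_def)
      then show "\<bar>\<Sum>k\<in>B. v k c\<bar> \<le> 1" using close[OF \<open>c<d\<close>] QB by simp
    qed
    moreover have "2 \<le> card B" "card B < t" using cB ij by (auto simp: n_def)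
    ultimately show False using m(4)[OF Bt] by blast
  next
    case True
    define C where "C = {..<n} - B"
    have Ct: "C \<subseteq> {..<t}" using True by (auto simp: C_def n_def less_Suc_eq)
    have "finite B" using Bsub finite_subset by blast
    then have cC: "card C = n - (j - i)" using Bsub cB by (simp add: C_def card_Diff_subset)
    have "in_box d (\<lambda>c. \<Sum>k\<in>C. v k c)"
      unfolding in_box_def
    proof (intro allI impI)
      fix c assume "c < d"
      have "(\<Sum>k\<in>C. v k c) = (\<Sum>k\<in>C. w k c)" using Ct by (intro sum.cong) (auto simp: w_def)
      also have "\<dots> = (\<Sum>k\<in>{..<n}. w k c) - (\<Sum>k\<in>B. w k c)"
        using Bsub by (simp add: C_def sum_diff)
      finally show "\<bar>\<Sum>k\<in>C. v k c\<bar> \<le> 1" using close[OF \<open>c<d\<close>] QB w0 by simp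
    qed
    moreover have "2 \<le> card C" "card C < t" using cC ij by (auto simp: n_def)
    ultimately show False using m(4)[OF Ct] by blast
  qed
qed

theorem theorem1:
  fixes d :: nat
  assumes "1 \<le> d"
  shows "finite {t. \<exists>v. minimal_seq d t v} \<and> tau d < 4 * (2 * d) ^ d"
proof -
  have sub: "{t. \<exists>v. minimal_seq d t v} \<subseteq> {..< 2 * (2 * d) ^ d}"
    using main_bound[OF _ assms] by fastforce
  then have fin: "finite {t. \<exists>v. minimal_seq d t v}" using finite_subset by blast
  have "minimal_seq d 2 (\<lambda>_ _. 0)"
    unfolding minimal_seq_def in_box_def by auto
  then have ne: "{t. \<exists>v. minimal_seq d t v} \<noteq> {}" by blast
  have "tau d \<in> {t. \<exists>v. minimal_seq d t v}" unfolding tau_def using fin ne by (rule Max_in)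
  then have "tau d < 2 * (2 * d) ^ d" using sub by auto
  then show ?thesis using fin by simp
qed


end
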